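(* Let $N\ge 1$, let $s_1,\dots,s_N>0$ and $u_1,\dots,u_N>0$ with the nodes indexed so that $u_1\le u_2\le\dots\le u_N$, let $H_1,\dots,H_N\ge 0$ be integers and $\mathcal{E}>0$. For slot length $\sigma>0$ and transmit probability $\tau\in(0,1)$ define $p_s=\tau(1-\tau)^{N-1}$, $\bar t_i=(1-\tau)^N\sigma$, $\bar t_s=\sum_{k=1}^N p_s(s_k+\sigma)$, $$\bar t_c=\sum_{k=2}^N \tau(1-\tau)^{N-k}\sum_{l=1}^{k-1}\binom{k-1}{l}\tau^l(1-\tau)^{k-1-l}(u_k+\sigma),$$ and the CSMA throughput per node and bit-cost of node $k$ $$\mathsf{S}=\frac{p_s}{\bar t_s+\bar t_c+\bar t_i},\qquad \mathsf{B}_k=\Bigl(H_k+\frac{\tau}{p_s}\Bigr)u_k\mathcal{E}.$$ If $\tau=c\sqrt{\sigma}$ for a fixed constant $c>0$, then $$\lim_{\sigma\to 0}\mathsf{S}=\frac{1}{\sum_{k=1}^N s_k}\quad\text{and}\quad \lim_{\sigma\to 0}\mathsf{B}_k=(H_k+1)u_k\mathcal{E}\ \text{ for every } k.$$ That is, CSMA based CoopMAC and Direct Link asymptotically attain the throughput and bit-cost of the corresponding Round Robin schemes.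
   Context: Interpretation (for CSMA based Direct Link and CoopMAC with $N$ saturated nodes sending 1-bit packets to an access point, all at transmit power $\mathcal{E}$): $s_k$ is the travel time of a packet of node $k$ ($1/R_k$ for direct transmission at rate $R_k$, or $1/R_{kh_k}+1/R_{h_k}$ if $k$ transmits via a helper $h_k$), $u_k$ is the duration of node $k$'s own transmission ($1/R_k$ or $1/R_{kh_k}$), and $H_k$ is the number of nodes that node $k$ helps (all $H_k=0$ in Direct Link). The Round Robin values are throughput $1/\sum_k s_k$ per node and bit-cost $(H_k+1)u_k\mathcal{E}$; $\sigma$ is a slot length normalized by packet size, so $\sigma\to0$ corresponds to packet lengths tending to infinity. *)

theory Defs
  imports "HOL-Analysis.Analysis"
begin

definition p_s :: "nat \<Rightarrow> real \<Rightarrow> real" where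
  "p_s N tau = tau * (1 - tau) ^ (N - 1)"

definition t_idle :: "nat \<Rightarrow> real \<Rightarrow> real \<Rightarrow> real" where
  "t_idle N sl tau = (1 - tau) ^ N * sl"

definition t_succ :: "nat \<Rightarrow> (nat \<Rightarrow> real) \<Rightarrow> real \<Rightarrow> real \<Rightarrow> real" where
  "t_succ N s sl tau = (\<Sum>k=1..N. p_s N tau * (s k + sl))"

definition t_coll :: "nat \<Rightarrow> (nat \<Rightarrow> real) \<Rightarrow> real \<Rightarrow> real \<Rightarrow> real" where
  "t_coll N u sl tau =
     (\<Sum>k=2..N. tau * (1 - tau) ^ (N - k) *
        (\<Sum>l=1..k-1. real ((k - 1) choose l) * tau ^ l * (1 - tau) ^ (k - 1 - l)) * (u k + sl))"

definition csma_S :: "nat \<Rightarrow> (nat \<Rightarrow> real) \<Rightarrow> (nat \<Rightarrow> real) \<Rightarrow> real \<Rightarrow> real \<Rightarrow> real" where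
  "csma_S N s u sl tau =
     p_s N tau / (t_succ N s sl tau + t_coll N u sl tau + t_idle N sl tau)"

definition csma_B :: "nat \<Rightarrow> nat \<Rightarrow> real \<Rightarrow> real \<Rightarrow> real \<Rightarrow> real" where
  "csma_B N H uk E tau = (real H + tau / p_s N tau) * uk * E"

end

theory Submission
  imports Defs
begin

lemma tau_lim: "((\<lambda>sl. c * sqrt sl) \<longlongrightarrow> 0) (at_right (0::real))"
proof -
  have "((\<lambda>sl. c * sqrt sl) \<longlongrightarrow> c * sqrt 0) (at_right (0::real))"
    by (intro tendsto_intros)
  then show ?thesis by simp
qed

theorem proposition2:
  fixes N :: nat and s u :: "nat \<Rightarrow> real" and H :: "nat \<Rightarrow> nat" and E c :: real
  assumes "N \<ge> 1"
    and "\<And>k. k \<in> {1..N} \<Longrightarrow> s k > 0"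
    and "\<And>k. k \<in> {1..N} \<Longrightarrow> u k > 0"
    and "\<And>i j. i \<in> {1..N} \<Longrightarrow> j \<in> {1..N} \<Longrightarrow> i \<le> j \<Longrightarrow> u i \<le> u j"
    and "E > 0" and "c > 0"
  shows "((\<lambda>sl. csma_S N s u sl (c * sqrt sl))
            \<longlongrightarrow> 1 / (\<Sum>k=1..N. s k)) (at_right 0) \<and>
         (\<forall>k\<in>{1..N}. ((\<lambda>sl. csma_B N (H k) (u k) E (c * sqrt sl))
            \<longlongrightarrow> (real (H k) + 1) * u k * E) (at_right 0))"
proof
  let ?t = "\<lambda>sl::real. c * sqrt sl"
  define G where "G = (\<lambda>sl t. \<Sum>k=2..N. (1 - t) ^ (N - k) *
        (\<Sum>l=1..k-1. real ((k - 1) choose l) * t ^ l * (1 - t) ^ (k - 1 - l)) * (u k + sl))"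
  define F where "F = (\<lambda>sl::real. (1 - ?t sl) ^ (N - 1) /
     ((1 - ?t sl) ^ (N - 1) * (\<Sum>k=1..N. s k + sl) + G sl (?t sl) + (1 - ?t sl) ^ N * sqrt sl / c))"
  have ev: "eventually (\<lambda>sl. csma_S N s u sl (?t sl) = F sl) (at_right 0)"

  proof (rule eventually_mono[OF eventually_at_right_less])
    fix sl :: real assume "0 < sl"
    then have tp: "?t sl \<noteq> 0" using assms(6) by simp
    have a: "t_succ N s sl (?t sl) = ?t sl * ((1 - ?t sl) ^ (N - 1) * (\<Sum>k=1..N. s k + sl))"
      unfolding t_succ_def p_s_def by (simp add: sum_distrib_left mult.assoc)
    have b: "t_coll N u sl (?t sl) = ?t sl * G sl (?t sl)"
      unfolding t_coll_def G_def by (subst sum_distrib_left) (rule sum.cong, simp_all add: ac_simps)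
    have sq: "sqrt sl * sqrt sl = sl" using \<open>0 < sl\<close> by simp
    have d: "t_idle N sl (?t sl) = ?t sl * ((1 - ?t sl) ^ N * sqrt sl / c)"
      unfolding t_idle_def using assms(6) sq by (simp add: field_simps)
    have p: "p_s N (?t sl) = ?t sl * (1 - ?t sl) ^ (N - 1)" unfolding p_s_def by simp
    show "csma_S N s u sl (?t sl) = F sl"
      unfolding csma_S_def F_def a b d p
      using tp by (simp only: distrib_left[symmetric]) (rule mult_divide_mult_cancel_left)
  qed
  have S0: "(\<Sum>k=1..N. s k) > 0"
    using assms(1,2) by (intro sum_pos) auto
  have G0: "G 0 0 = 0" unfolding G_def
    by (intro sum.neutral ballI) (auto intro!: sum.neutral)
  have "(F \<longlongrightarrow> (1 - 0) ^ (N - 1) /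
     ((1 - 0) ^ (N - 1) * (\<Sum>k=1..N. s k + 0) + G 0 0 + (1 - 0) ^ N * sqrt 0 / c)) (at_right 0)"
    unfolding F_def G_def
    by (intro tendsto_intros tau_lim) (use S0 G0 assms(6) in \<open>auto simp: G_def\<close>)
  then have "(F \<longlongrightarrow> 1 / (\<Sum>k=1..N. s k)) (at_right 0)" using G0 by simp
  then show "((\<lambda>sl. csma_S N s u sl (?t sl)) \<longlongrightarrow> 1 / (\<Sum>k=1..N. s k)) (at_right 0)"
    by (rule Lim_transform_eventually[OF _ eventually_mono[OF ev]]) simp
next
  show "\<forall>k\<in>{1..N}. ((\<lambda>sl. csma_B N (H k) (u k) E (c * sqrt sl))
            \<longlongrightarrow> (real (H k) + 1) * u k * E) (at_right 0)"
  proof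
    fix k assume k: "k \<in> {1..N}"
    have ev: "eventually (\<lambda>sl. csma_B N (H k) (u k) E (c * sqrt sl) =
        (real (H k) + 1 / (1 - c * sqrt sl) ^ (N - 1)) * u k * E) (at_right 0)"

    proof (rule eventually_mono[OF eventually_at_right_less])
      fix sl :: real assume "0 < sl"
      then have "c * sqrt sl \<noteq> 0" using assms(6) by simp
      then show "csma_B N (H k) (u k) E (c * sqrt sl) =
        (real (H k) + 1 / (1 - c * sqrt sl) ^ (N - 1)) * u k * E"
        unfolding csma_B_def p_s_def by simp
    qed
    have "((\<lambda>sl. (real (H k) + 1 / (1 - c * sqrt sl) ^ (N - 1)) * u k * E) \<longlongrightarrow>
       (real (H k) + 1 / (1 - 0) ^ (N - 1)) * u k * E) (at_right 0)"
      by (intro tendsto_intros tau_lim) simp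
    then have "((\<lambda>sl. (real (H k) + 1 / (1 - c * sqrt sl) ^ (N - 1)) * u k * E) \<longlongrightarrow>
       (real (H k) + 1) * u k * E) (at_right 0)" by simp
    then show "((\<lambda>sl. csma_B N (H k) (u k) E (c * sqrt sl))
            \<longlongrightarrow> (real (H k) + 1) * u k * E) (at_right 0)"
      by (rule Lim_transform_eventually[OF _ eventually_mono[OF ev]]) simp
  qed
qed

end
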